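(* Let $C_1,\dots,C_M$ be linear codes of length $n$ over $\mathbb{F}_q$, let $A=(a_{i,j})$ be an $M\times N$ ($M\le N$) upper triangular matrix that is nonsingular by columns, let $C=[C_1,\dots,C_M]\cdot A$, let $1\le b\le n$, and set $d^*=\min\{(N-i+1)d_b(C_i)\mid i=1,\dots,M\}$. Then: (a) $d_b(C)\le\min\{N d_b(C_1),\,(N-i+1)d_b(C_i)+b-1 \mid i=2,\dots,M\}$. (b) If $d^*=N d_b(C_1)$, then $d_b(C)=d^*$. (c) Let $2\le i_0\le M$ satisfy $(N-i_0+1)d_b(C_{i_0})=d^*$. If there exist a codeword $\mathbf{c}_{i_0}\in C_{i_0}$ with $w_b(\mathbf{c}_{i_0})=d_b(C_{i_0})$ and a hole $H\in\mathbb{H}(\chi_1(\mathbf{c}_{i_0}))$ with $|H|\ge b-1$ and $\{1,n\}\cap H\ne\emptyset$, then $d_b(C)=d^*$.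
   Context: For a vector of length $L$, indices are cyclic mod $L$; $\chi_b(\mathbf{x})=\{i\in\{1,\dots,L\}:(x_i,\dots,x_{i+b-1})\ne\mathbf{0}\}$ (indices mod $L$), $w_b(\mathbf{x})=|\chi_b(\mathbf{x})|$, and for a linear code $C$, $d_b(C)=\min_{\mathbf{0}\ne\mathbf{c}\in C}w_b(\mathbf{c})$. For $J\subseteq\mathbb{Z}_n=\{1,\dots,n\}$, a hole of $J$ of size $h\ge1$ is a set $H=\{a+1,\dots,a+h\}\subseteq\mathbb{Z}_n\setminus J$ (indices mod $n$) with $a,a+h+1\in J$; $\mathbb{H}(J)$ is the set of holes of $J$. Matrix product code: $[C_1,\dots,C_M]\cdot A=\{[\sum_\ell a_{\ell,1}\mathbf{c}_\ell,\dots,\sum_\ell a_{\ell,N}\mathbf{c}_\ell] : \mathbf{c}_\ell\in C_\ell\}\subseteq\mathbb{F}_q^{nN}$. $A$ is upper triangular if $a_{i,j}=0$ for $i>j$. $A$ is nonsingular by columns (NSC) if for all $1\le t\le M$ and $1\le j_1<\dots<j_t\le N$ the $t\times t$ submatrix formed by the first $t$ rows and columns $j_1,\dots,j_t$ is nonsingular. *)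

theory Defs
  imports "Jordan_Normal_Form.Determinant"
begin

(* Vectors of length L over a field are lists of length L; positions are 1-based,
   position i is stored at list index i-1.  Indices are cyclic mod L. *)

definition lin_code :: "nat \<Rightarrow> 'a::field list set \<Rightarrow> bool" where
  "lin_code n C \<longleftrightarrow> C \<subseteq> {x. length x = n} \<and> replicate n 0 \<in> C \<and>
     (\<forall>x\<in>C. \<forall>y\<in>C. map2 (+) x y \<in> C) \<and> (\<forall>s. \<forall>x\<in>C. map ((*) s) x \<in> C)"

definition is_zero_vec :: "'a::zero list \<Rightarrow> bool" where
  "is_zero_vec x \<longleftrightarrow> (\<forall>v\<in>set x. v = 0)"

definition chi :: "nat \<Rightarrow> 'a::zero list \<Rightarrow> nat set" where
  "chi b x = {i\<in>{1..length x}. \<exists>j<b. x ! ((i - 1 + j) mod length x) \<noteq> 0}"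

definition wb :: "nat \<Rightarrow> 'a::zero list \<Rightarrow> nat" where
  "wb b x = card (chi b x)"

definition db :: "nat \<Rightarrow> 'a::zero list set \<Rightarrow> nat" where
  "db b C = Inf {wb b c | c. c \<in> C \<and> \<not> is_zero_vec c}"

definition cyc :: "nat \<Rightarrow> nat \<Rightarrow> nat" where
  "cyc n i = ((i - 1) mod n) + 1"

definition holes :: "nat \<Rightarrow> nat set \<Rightarrow> nat set set" where
  "holes n J = {H. \<exists>a h. a \<in> {1..n} \<and> h \<ge> 1 \<and> H = {cyc n (a + k) | k. 1 \<le> k \<and> k \<le> h} \<and>
      H \<subseteq> {1..n} - J \<and> cyc n a \<in> J \<and> cyc n (a + h + 1) \<in> J}"

definition mpc :: "nat \<Rightarrow> nat \<Rightarrow> nat \<Rightarrow> (nat \<Rightarrow> 'a::field list set) \<Rightarrow> (nat \<Rightarrow> nat \<Rightarrow> 'a) \<Rightarrow> 'a list set" where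
  "mpc n M N Cs A = {concat (map (\<lambda>j. map (\<lambda>k. \<Sum>l=1..M. A l j * (c l ! k)) [0..<n]) [1..<N+1]) | c.
      \<forall>l\<in>{1..M}. c l \<in> Cs l}"

definition upper_tri :: "nat \<Rightarrow> nat \<Rightarrow> (nat \<Rightarrow> nat \<Rightarrow> 'a::zero) \<Rightarrow> bool" where
  "upper_tri M N A \<longleftrightarrow> (\<forall>i\<in>{1..M}. \<forall>j\<in>{1..N}. i > j \<longrightarrow> A i j = 0)"

definition NSC :: "nat \<Rightarrow> nat \<Rightarrow> (nat \<Rightarrow> nat \<Rightarrow> 'a::field) \<Rightarrow> bool" where
  "NSC M N A \<longleftrightarrow> (\<forall>t\<in>{1..M}. \<forall>js :: nat \<Rightarrow> nat.
      strict_mono_on {..<t} js \<and> js ` {..<t} \<subseteq> {1..N} \<longrightarrow>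
      det (mat t t (\<lambda>(r, s). A (r + 1) (js s))) \<noteq> 0)"

end

theory Submission
  imports Defs
begin


lemma core:
  fixes A :: "nat \<Rightarrow> nat \<Rightarrow> 'a::field"
  assumes nsc: "NSC M N A" and s: "1 \<le> s" "s \<le> M" and MN: "M \<le> N"
    and vs: "v s \<noteq> 0" and vz: "\<forall>l. s < l \<and> l \<le> M \<longrightarrow> v l = 0"
  shows "N - s + 1 \<le> card {j\<in>{1..N}. (\<Sum>l=1..M. A l j * v l) \<noteq> 0}"
proof (rule ccontr)
  let ?K = "{j\<in>{1..N}. (\<Sum>l=1..M. A l j * v l) \<noteq> 0}"
  let ?Z = "{j\<in>{1..N}. (\<Sum>l=1..M. A l j * v l) = 0}"
  assume "\<not> ?thesis"
  hence cK: "card ?K < N - s + 1" by simp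
  have Zeq: "?Z = {1..N} - ?K" by auto
  have "card ?Z = card {1..N} - card ?K" unfolding Zeq by (rule card_Diff_subset) auto
  hence "card ?Z = N - card ?K" by simp
  hence cZ: "s \<le> card ?Z" using cK s MN by linarith
  have fZ: "finite ?Z" by simp
  define xs where "xs = sorted_list_of_set ?Z"
  define js where "js = (\<lambda>k. xs ! k)"
  have lxs: "length xs = card ?Z" unfolding xs_def by simp
  have sxs: "sorted_wrt (<) xs" unfolding xs_def by (rule strict_sorted_list_of_set)
  have sm: "strict_mono_on {..<s} js"
  proof (rule strict_mono_onI)
    fix r k assume "r \<in> {..<s}" "k \<in> {..<s}" "r < k"
    thus "js r < js k" unfolding js_def using sorted_wrt_nth_less[OF sxs, of r k] lxs cZ by auto
  qed
  have jsZ: "\<And>k. k < s \<Longrightarrow> js k \<in> ?Z"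
  proof -
    fix k assume "k < s"
    hence "xs ! k \<in> set xs" using lxs cZ by simp
    thus "js k \<in> ?Z" unfolding js_def xs_def using fZ by simp
  qed
  have img: "js ` {..<s} \<subseteq> {1..N}" using jsZ by auto
  have det: "det (mat s s (\<lambda>(r, k). A (r + 1) (js k))) \<noteq> 0"
    using nsc s img sm unfolding NSC_def by auto
  define B where "B = mat s s (\<lambda>(k, r). A (r + 1) (js k))"
  have BT: "B = transpose_mat (mat s s (\<lambda>(r, k). A (r + 1) (js k)))"
    unfolding B_def by (auto simp: transpose_mat_def)
  have Bc: "B \<in> carrier_mat s s" unfolding B_def by simp
  have detB: "det B \<noteq> 0" using det unfolding BT by (subst det_transpose) auto
  define w where "w = vec s (\<lambda>r. v (r + 1))"
  have wc: "w \<in> carrier_vec s" unfolding w_def by simp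
  have wnz: "w \<noteq> 0\<^sub>v s"
  proof
    assume "w = 0\<^sub>v s"
    hence "w $ (s - 1) = 0" using s by simp
    thus False using vs s unfolding w_def by simp
  qed
  have "B *\<^sub>v w = 0\<^sub>v s"
  proof (rule eq_vecI)
    fix k assume k: "k < dim_vec (0\<^sub>v s :: 'a vec)"
    hence k: "k < s" by simp
    have "(B *\<^sub>v w) $ k = (\<Sum>r<s. A (r + 1) (js k) * v (r + 1))"
      using k unfolding B_def w_def
      by (simp add: mult_mat_vec_def scalar_prod_def row_def lessThan_atLeast0)
    also have "\<dots> = (\<Sum>l=1..s. A l (js k) * v l)"
      by (simp add: sum.atLeast1_atMost_eq)
    also have "\<dots> = (\<Sum>l=1..M. A l (js k) * v l)"
      by (rule sum.mono_neutral_left) (use s vz in auto)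
    also have "\<dots> = 0" using jsZ[OF k] by simp
    finally show "(B *\<^sub>v w) $ k = 0\<^sub>v s $ k" using k by simp
  qed (use Bc in simp)
  hence "det B = 0" using det_0_iff_vec_prod_zero_field[OF Bc] wc wnz by auto
  thus False using detB by simp
qed

lemma concat_blocks:
  assumes "\<forall>j<N. length (f j) = n"
  shows "length (concat (map f [0..<N])) = N * n \<and>
    (\<forall>jj k. jj < N \<longrightarrow> k < n \<longrightarrow> concat (map f [0..<N]) ! (jj * n + k) = f jj ! k)"
  using assms
proof (induction N)
  case 0
  then show ?case by simp
next
  case (Suc N)
  hence IH: "length (concat (map f [0..<N])) = N * n"
    "\<And>jj k. jj < N \<Longrightarrow> k < n \<Longrightarrow> concat (map f [0..<N]) ! (jj * n + k) = f jj ! k"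
    by auto
  have lN: "length (f N) = n" using Suc.prems by simp
  show ?case
  proof (intro conjI allI impI)
    show "length (concat (map f [0..<Suc N])) = Suc N * n" using IH lN by simp
  next
    fix jj k assume jj: "jj < Suc N" and k: "k < n"
    show "concat (map f [0..<Suc N]) ! (jj * n + k) = f jj ! k"
    proof (cases "jj < N")
      case True
      have "jj * n + k < N * n"
      proof -
        have "jj * n + k < jj * n + n" using k by simp
        also have "\<dots> = Suc jj * n" by simp
        also have "\<dots> \<le> N * n" using True by (intro mult_le_mono1) simp
        finally show ?thesis .
      qed
      have ce: "concat (map f [0..<Suc N]) = concat (map f [0..<N]) @ f N" by simp
      show ?thesis unfolding ce nth_append using IH(1) IH(2)[OF True k] \<open>jj * n + k < N * n\<close> by simp
    next
      case False
      hence "jj = N" using jj by simp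
      then show ?thesis using IH by (simp add: nth_append)
    qed
  qed
qed

lemma mpc_nth:
  fixes A :: "nat \<Rightarrow> nat \<Rightarrow> 'a::field" and M :: nat and c :: "nat \<Rightarrow> 'a list"
  assumes n: "0 < n" and N: "0 < N"
  defines "Y \<equiv> concat (map (\<lambda>j. map (\<lambda>k. \<Sum>l=1..M. A l j * (c l ! k)) [0..<n]) [1..<N+1])"
  shows "length Y = N * n"
    and "Y ! (x mod (N * n)) = (\<Sum>l=1..M. A l (x div n mod N + 1) * (c l ! (x mod n)))"
proof -
  define f where "f = (\<lambda>jj. map (\<lambda>k. \<Sum>l=1..M. A l (Suc jj) * (c l ! k)) [0..<n])"
  have Yf: "Y = concat (map f [0..<N])"
  proof -
    have u: "[1..<N+1] = map Suc [0..<N]" by (simp add: map_Suc_upt)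
    show ?thesis unfolding Y_def f_def u map_map comp_def ..
  qed
  have lf: "\<forall>j<N. length (f j) = n" unfolding f_def by simp
  note cb = concat_blocks[OF lf]
  show "length Y = N * n" using cb Yf by simp
  have e: "x mod (N * n) = (x div n mod N) * n + x mod n"
    using mod_mult2_eq[of x n N] by (simp add: mult.commute)
  have "Y ! (x mod (N * n)) = f (x div n mod N) ! (x mod n)"
    unfolding e Yf using cb N n by simp
  also have "\<dots> = (\<Sum>l=1..M. A l (x div n mod N + 1) * (c l ! (x mod n)))"
    unfolding f_def using n by simp
  finally show "Y ! (x mod (N * n)) = (\<Sum>l=1..M. A l (x div n mod N + 1) * (c l ! (x mod n)))" .
qed

lemma wb_alt: "wb b x = card {p. p < length x \<and> (\<exists>t<b. x ! ((p + t) mod length x) \<noteq> 0)}"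
proof -
  have "chi b x = Suc ` {p. p < length x \<and> (\<exists>t<b. x ! ((p + t) mod length x) \<noteq> 0)}"
    unfolding chi_def
  proof (rule Set.set_eqI)
    fix i
    show "i \<in> {i \<in> {1..length x}. \<exists>j<b. x ! ((i - 1 + j) mod length x) \<noteq> 0} \<longleftrightarrow>
      i \<in> Suc ` {p. p < length x \<and> (\<exists>t<b. x ! ((p + t) mod length x) \<noteq> 0)}"
    proof
      assume a: "i \<in> {i \<in> {1..length x}. \<exists>j<b. x ! ((i - 1 + j) mod length x) \<noteq> 0}"
      hence "i = Suc (i - 1)" by auto
      moreover have "i - 1 \<in> {p. p < length x \<and> (\<exists>t<b. x ! ((p + t) mod length x) \<noteq> 0)}"
        using a by auto
      ultimately show "i \<in> Suc ` {p. p < length x \<and> (\<exists>t<b. x ! ((p + t) mod length x) \<noteq> 0)}"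
        by (rule image_eqI)
    qed auto
  qed
  thus ?thesis unfolding wb_def by (simp add: card_image)
qed

lemma count_blocks:
  fixes n N :: nat and Q :: "nat \<Rightarrow> bool"
  assumes n: "0 < n"
  shows "card {g. g < N * n \<and> Q g} = (\<Sum>p<n. card {jj. jj < N \<and> Q (jj * n + p)})"
proof -
  have "bij_betw (\<lambda>(p, jj). jj * n + p) (Sigma {..<n} (\<lambda>p. {jj. jj < N \<and> Q (jj * n + p)}))
          {g. g < N * n \<and> Q g}"
  proof (rule bij_betw_byWitness[where f' = "\<lambda>g. (g mod n, g div n)"])
    show "\<forall>a\<in>Sigma {..<n} (\<lambda>p. {jj. jj < N \<and> Q (jj * n + p)}).
       (\<lambda>g. (g mod n, g div n)) ((\<lambda>(p, jj). jj * n + p) a) = a" by auto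
    show "\<forall>a'\<in>{g. g < N * n \<and> Q g}. (\<lambda>(p, jj). jj * n + p) ((\<lambda>g. (g mod n, g div n)) a') = a'"
      by (simp add: mult.commute)
    show "(\<lambda>(p, jj). jj * n + p) ` Sigma {..<n} (\<lambda>p. {jj. jj < N \<and> Q (jj * n + p)})
           \<subseteq> {g. g < N * n \<and> Q g}"
    proof clarsimp
      fix p jj assume "p < n" "jj < N"
      hence "jj * n + p < jj * n + n" by simp
      also have "\<dots> = Suc jj * n" by simp
      also have "\<dots> \<le> N * n" using \<open>jj < N\<close> by (intro mult_le_mono1) simp
      finally show "jj * n + p < N * n" .
    qed
    show "(\<lambda>g. (g mod n, g div n)) ` {g. g < N * n \<and> Q g}
           \<subseteq> Sigma {..<n} (\<lambda>p. {jj. jj < N \<and> Q (jj * n + p)})"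
      using n by (auto simp: less_mult_imp_div_less mult.commute)
  qed
  hence "card {g. g < N * n \<and> Q g} = card (Sigma {..<n} (\<lambda>p. {jj. jj < N \<and> Q (jj * n + p)}))"
    by (simp add: bij_betw_same_card)
  also have "\<dots> = (\<Sum>p<n. card {jj. jj < N \<and> Q (jj * n + p)})"
    by (rule card_SigmaI) auto
  finally show ?thesis .
qed

lemma block_arith:
  fixes n N jj p t :: nat
  assumes n: "0 < n"
  shows "(jj * n + p + t) div n = jj + (p + t) div n" and "(jj * n + p + t) mod n = (p + t) mod n"
proof -
  have e: "jj * n + p + t = (p + t) + jj * n" by simp
  show "(jj * n + p + t) div n = jj + (p + t) div n" unfolding e using n by simp
  show "(jj * n + p + t) mod n = (p + t) mod n" unfolding e by simp
qed

lemma shift_mod: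
  fixes N j d :: nat
  assumes "1 \<le> j" "j \<le> N" "d \<le> 1"
  shows "((j + N - 1 - d) mod N + d) mod N = j - 1"
proof -
  have "((j + N - 1 - d) mod N + d) mod N = (j + N - 1 - d + d) mod N" by (simp add: mod_add_left_eq)
  also have "j + N - 1 - d + d = (j - 1) + N" using assms by simp
  also have "((j - 1) + N) mod N = j - 1" using assms by (subst mod_add_self2) simp
  finally show ?thesis .
qed

lemma zero_vec_nth: "is_zero_vec x \<Longrightarrow> k < length x \<Longrightarrow> x ! k = 0"
  unfolding is_zero_vec_def by (auto dest: nth_mem)

lemma lower:
  fixes A :: "nat \<Rightarrow> nat \<Rightarrow> 'a::field" and c :: "nat \<Rightarrow> 'a list"
  assumes nsc: "NSC M N A" and MN: "M \<le> N" and s: "1 \<le> s" "s \<le> M" and n: "0 < n"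
    and b: "b \<le> n"
    and lens: "\<forall>l\<in>{1..M}. length (c l) = n"
    and cs: "\<not> is_zero_vec (c s)" and cz: "\<forall>l. s < l \<and> l \<le> M \<longrightarrow> is_zero_vec (c l)"
  defines "Y \<equiv> concat (map (\<lambda>j. map (\<lambda>k. \<Sum>l=1..M. A l j * (c l ! k)) [0..<n]) [1..<N+1])"
  shows "(N - s + 1) * wb b (c s) \<le> wb b Y"
proof -
  have N: "0 < N" using s MN by simp
  define y where "y = (\<lambda>j k. \<Sum>l=1..M. A l j * (c l ! k))"
  define W where "W = (\<lambda>g. \<exists>t<b. y ((g + t) div n mod N + 1) ((g + t) mod n) \<noteq> 0)"
  define J where "J = (\<lambda>p. {jj. jj < N \<and> W (jj * n + p)})"
  define P where "P = {p. p < n \<and> (\<exists>t<b. c s ! ((p + t) mod n) \<noteq> 0)}"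
  have lY: "length Y = N * n" unfolding Y_def using mpc_nth(1)[OF n N] by blast
  have Ynth: "\<And>x. Y ! (x mod (N * n)) = y (x div n mod N + 1) (x mod n)"
    unfolding Y_def y_def using mpc_nth(2)[OF n N] by blast
  have "wb b Y = card {g. g < N * n \<and> W g}"
    unfolding wb_alt lY W_def Ynth ..
  also have "\<dots> = (\<Sum>p<n. card (J p))" unfolding J_def by (rule count_blocks[OF n])
  finally have wY: "wb b Y = (\<Sum>p<n. card (J p))" .
  have lcs: "length (c s) = n" using lens s by auto
  have wc: "wb b (c s) = card P" unfolding wb_alt lcs P_def ..
  have key: "N - s + 1 \<le> card (J p)" if pP: "p \<in> P" for p
  proof -
    obtain t where t: "t < b" and ct: "c s ! ((p + t) mod n) \<noteq> 0" using pP unfolding P_def by auto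
    have p: "p < n" using pP unfolding P_def by auto
    define q where "q = (p + t) mod n"
    define d where "d = (p + t) div n"
    have d1: "d \<le> 1"
    proof -
      have "p + t < 2 * n" using p t b by simp
      hence "(p + t) div n < 2" using n by (simp add: div_less_iff_less_mult)
      thus ?thesis unfolding d_def by simp
    qed
    have qn: "q < n" unfolding q_def using n by simp
    define K where "K = {j\<in>{1..N}. y j q \<noteq> 0}"
    have cK: "N - s + 1 \<le> card K"
      unfolding K_def y_def
    proof (rule core[OF nsc s MN])
      show "c s ! q \<noteq> 0" using ct unfolding q_def .
      show "\<forall>l. s < l \<and> l \<le> M \<longrightarrow> c l ! q = 0"
        using cz lens qn s by (auto intro: zero_vec_nth)
    qed
    define h where "h = (\<lambda>j. (j + N - 1 - d) mod N)"
    have hj: "(h j + d) mod N = j - 1" if "j \<in> {1..N}" for j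
      unfolding h_def using shift_mod[of j N d] that d1 by simp
    have hK: "h ` K \<subseteq> J p"
    proof
      fix jj assume "jj \<in> h ` K"
      then obtain j where j: "j \<in> K" and jj: "jj = h j" by auto
      have j1: "j \<in> {1..N}" using j unfolding K_def by simp
      have "jj < N" unfolding jj h_def using N by simp
      moreover have "W (jj * n + p)"
        unfolding W_def
      proof (intro exI conjI)
        show "t < b" by (rule t)
        have "(jj * n + p + t) div n mod N + 1 = j"
          unfolding block_arith[OF n] jj d_def[symmetric] using hj[OF j1] j1 by simp
        moreover have "(jj * n + p + t) mod n = q" unfolding block_arith[OF n] q_def ..
        ultimately show "y ((jj * n + p + t) div n mod N + 1) ((jj * n + p + t) mod n) \<noteq> 0"
          using j unfolding K_def by simp
      qed
      ultimately show "jj \<in> J p" unfolding J_def by simp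
    qed
    have "inj_on h K"
    proof (rule inj_onI)
      fix j1 j2 assume "j1 \<in> K" "j2 \<in> K" "h j1 = h j2"
      hence "j1 \<in> {1..N}" "j2 \<in> {1..N}" "(h j1 + d) mod N = (h j2 + d) mod N"
        unfolding K_def by auto
      thus "j1 = j2" using hj by fastforce
    qed
    hence "card K \<le> card (J p)"
      using hK by (intro card_inj_on_le) (auto simp: J_def)
    thus ?thesis using cK by simp
  qed
  have "(N - s + 1) * wb b (c s) = (\<Sum>p\<in>P. N - s + 1)" unfolding wc by simp
  also have "\<dots> \<le> (\<Sum>p\<in>P. card (J p))" using key by (rule sum_mono)
  also have "\<dots> \<le> (\<Sum>p<n. card (J p))" by (rule sum_mono2) (auto simp: P_def)
  finally show ?thesis unfolding wY .
qed

definition holefree :: "nat \<Rightarrow> nat \<Rightarrow> 'a::zero list \<Rightarrow> bool" where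
  "holefree n b x \<longleftrightarrow> (\<forall>p t1 t2. p < n \<longrightarrow> t1 < b \<longrightarrow> t2 < b \<longrightarrow> n \<le> p + t1 \<longrightarrow> p + t2 < n \<longrightarrow>
      x ! (p + t1 - n) = 0 \<or> x ! (p + t2) = 0)"

lemma single_sum:
  fixes A :: "nat \<Rightarrow> nat \<Rightarrow> 'a::field"
  assumes i: "1 \<le> i" "i \<le> M" and k: "k < n"
  shows "(\<Sum>l=1..M. A l j * ((if l = i then x else replicate n 0) ! k)) = A i j * x ! k"
proof -
  have "(\<Sum>l=1..M. A l j * ((if l = i then x else replicate n 0) ! k)) =
        (\<Sum>l\<in>{1..M}. if l = i then A i j * x ! k else 0)"
    using k by (intro sum.cong) auto
  also have "\<dots> = A i j * x ! k" using i by simp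
  finally show ?thesis .
qed

lemma upper:
  fixes A :: "nat \<Rightarrow> nat \<Rightarrow> 'a::field" and x :: "'a list"
  assumes ut: "upper_tri M N A" and i: "1 \<le> i" "i \<le> M" and MN: "M \<le> N" and n: "0 < n"
    and b: "b \<le> n" and lx: "length x = n"
  defines "Y \<equiv> concat (map (\<lambda>j. map (\<lambda>k. \<Sum>l=1..M. A l j * ((if l = i then x else replicate n 0) ! k)) [0..<n]) [1..<N+1])"
  shows "wb b Y \<le> (N - i + 1) * wb b x + (b - 1)"
    and "i = 1 \<Longrightarrow> wb b Y \<le> N * wb b x"
    and "2 \<le> i \<Longrightarrow> holefree n b x \<Longrightarrow> wb b Y \<le> (N - i + 1) * wb b x"
proof -
  have N: "0 < N" using i MN by simp
  define y where "y = (\<lambda>j k. \<Sum>l=1..M. A l j * ((if l = i then x else replicate n 0) ! k))"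
  have yk: "\<And>j k. k < n \<Longrightarrow> y j k = A i j * x ! k" unfolding y_def using single_sum[OF i] by blast
  define W where "W = (\<lambda>g. \<exists>t<b. y ((g + t) div n mod N + 1) ((g + t) mod n) \<noteq> 0)"
  define J where "J = (\<lambda>p. {jj. jj < N \<and> W (jj * n + p)})"
  define P where "P = {p. p < n \<and> (\<exists>t<b. x ! ((p + t) mod n) \<noteq> 0)}"
  have lY: "length Y = N * n" unfolding Y_def
    by (rule mpc_nth(1)[OF n N, where c = "\<lambda>l. if l = i then x else replicate n 0"])
  have Ynth: "\<And>z. Y ! (z mod (N * n)) = y (z div n mod N + 1) (z mod n)"
    unfolding Y_def y_def
    by (rule mpc_nth(2)[OF n N, where c = "\<lambda>l. if l = i then x else replicate n 0"])
  have "wb b Y = card {g. g < N * n \<and> W g}"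
    unfolding wb_alt lY W_def Ynth ..
  also have "\<dots> = (\<Sum>p<n. card (J p))" unfolding J_def by (rule count_blocks[OF n])
  finally have wY: "wb b Y = (\<Sum>p<n. card (J p))" .
  have wx: "wb b x = card P" unfolding wb_alt lx P_def ..
  have memJ: "p \<in> P \<and> (i - 1 \<le> jj \<or> (2 \<le> i \<and> jj = i - 2 \<and> n < p + b \<and>
      (\<exists>t<b. n \<le> p + t \<and> x ! (p + t - n) \<noteq> 0))) \<and>
      (2 \<le> i \<and> jj = N - 1 \<longrightarrow> (\<exists>t<b. p + t < n \<and> x ! (p + t) \<noteq> 0))"
    if p: "p < n" and jj: "jj \<in> J p" for p jj
  proof -
    have jjN: "jj < N" and "W (jj * n + p)" using jj unfolding J_def by auto
    then obtain t where t: "t < b" and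
      yt: "y ((jj * n + p + t) div n mod N + 1) ((jj * n + p + t) mod n) \<noteq> 0"
      unfolding W_def by auto
    define d where "d = (p + t) div n"
    define blk where "blk = (jj + d) mod N"
    have d1: "d \<le> 1"
    proof -
      have "p + t < 2 * n" using p t b by simp
      hence "(p + t) div n < 2" using n by (simp add: div_less_iff_less_mult)
      thus ?thesis unfolding d_def by simp
    qed
    have yt': "y (blk + 1) ((p + t) mod n) \<noteq> 0"
      using yt unfolding block_arith[OF n] blk_def d_def .
    have "(p + t) mod n < n" using n by simp
    hence Ax: "A i (blk + 1) \<noteq> 0" "x ! ((p + t) mod n) \<noteq> 0" using yt' yk by auto
    have blkN: "blk < N" unfolding blk_def using N by simp
    have ib: "i \<le> blk + 1"
    proof (rule ccontr)
      assume "\<not> i \<le> blk + 1"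
      hence "A i (blk + 1) = 0" using ut i MN blkN unfolding upper_tri_def by auto
      thus False using Ax by simp
    qed
    have pP: "p \<in> P" unfolding P_def using p t Ax by auto
    show ?thesis
    proof (cases "d = 0")
      case True
      hence "blk = jj" unfolding blk_def using jjN by simp
      moreover have "p + t < n" using True n unfolding d_def by (simp add: div_eq_0_iff)
      ultimately show ?thesis using pP ib Ax t by auto
    next
      case False
      hence d: "d = 1" using d1 by simp
      have pt: "n \<le> p + t" using d n unfolding d_def by (metis div_eq_0_iff not_less zero_neq_one)
      have q: "(p + t) mod n = p + t - n"
      proof -
        have "(p + t) mod n = (p + t - n) mod n" using pt by (rule le_mod_geq)
        also have "p + t - n < n" using p t b by simp
        hence "(p + t - n) mod n = p + t - n" by simp
        finally show ?thesis .
      qed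
      have A1: "\<exists>t<b. n \<le> p + t \<and> x ! (p + t - n) \<noteq> 0" using t pt Ax(2) q by auto
      show ?thesis
      proof (cases "jj + 1 < N")
        case True
        hence "blk = jj + 1" unfolding blk_def d by simp
        hence "i - 1 \<le> jj \<or> (2 \<le> i \<and> jj = i - 2)" using ib by auto
        moreover have "jj \<noteq> N - 1" using True by simp
        ultimately show ?thesis using pP A1 t pt by auto
      next
        case False
        hence "jj = N - 1" using jjN by simp
        hence "blk = 0" unfolding blk_def d using N by simp
        hence "i = 1" using ib i by simp
        thus ?thesis using pP \<open>jj = N - 1\<close> i MN by auto
      qed
    qed
  qed
  have Pn: "P \<subseteq> {..<n}" unfolding P_def by auto
  have Jfin: "\<And>p. J p \<subseteq> {..<N}" unfolding J_def by auto
  have cb_gen: "card (J p) \<le> (if p \<in> P then N - i + 1 else 0) + (if n < p + b then 1 else 0)"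
    if p: "p < n" for p
  proof -
    have sub: "J p \<subseteq> (if p \<in> P then {i - 1..<N} else {}) \<union> (if n < p + b then {i - 2} else {})"
      using memJ[OF p] Jfin by fastforce
    have "card (J p) \<le> card ((if p \<in> P then {i - 1..<N} else {}) \<union> (if n < p + b then {i - 2} else {}))"
      by (rule card_mono[OF _ sub]) auto
    also have "\<dots> \<le> card (if p \<in> P then {i - 1..<N} else {}) + card (if n < p + b then {i - 2::nat} else {})"
      by (rule card_Un_le)
    also have "\<dots> = (if p \<in> P then N - i + 1 else 0) + (if n < p + b then 1 else 0)"
      using i MN by auto
    finally show ?thesis .
  qed
  have sumP: "(\<Sum>p<n. if p \<in> P then N - i + 1 else 0) = (N - i + 1) * card P"
  proof -
    have "(\<Sum>p<n. if p \<in> P then N - i + 1 else 0) = (\<Sum>p\<in>{..<n} \<inter> P. N - i + 1)"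
      by (rule sum.inter_restrict[symmetric]) simp
    also have "{..<n} \<inter> P = P" using Pn by auto
    finally show ?thesis by simp
  qed
  show "wb b Y \<le> (N - i + 1) * wb b x + (b - 1)"
  proof -
    have "wb b Y \<le> (\<Sum>p<n. (if p \<in> P then N - i + 1 else 0) + (if n < p + b then 1 else 0))"
      unfolding wY by (rule sum_mono) (use cb_gen in simp)
    also have "\<dots> = (N - i + 1) * card P + (\<Sum>p<n. if n < p + b then 1 else 0)"
      by (simp add: sum.distrib sumP)
    also have "(\<Sum>p<n. if n < p + b then 1 else (0::nat)) = card {p\<in>{..<n}. n < p + b}"
      by (simp add: sum.If_cases Int_def conj_commute)
    also have "{p\<in>{..<n}. n < p + b} = {n + 1 - b..<n}" using b by auto
    finally show ?thesis unfolding wx using b by simp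
  qed
  show "wb b Y \<le> N * wb b x" if i1: "i = 1"
  proof -
    have "card (J p) \<le> (if p \<in> P then N - i + 1 else 0)" if p: "p < n" for p
    proof -
      have "J p \<subseteq> (if p \<in> P then {i - 1..<N} else {})"
        using memJ[OF p] Jfin i1 by fastforce
      hence "card (J p) \<le> card (if p \<in> P then {i - 1..<N} else {})"
        by (intro card_mono) auto
      thus ?thesis using i MN by auto
    qed
    hence "wb b Y \<le> (\<Sum>p<n. if p \<in> P then N - i + 1 else 0)"
      unfolding wY by (intro sum_mono) simp
    hence "wb b Y \<le> (N - i + 1) * card P" unfolding sumP .
    thus ?thesis unfolding wx using i1 N by simp
  qed
  show "wb b Y \<le> (N - i + 1) * wb b x" if i2: "2 \<le> i" and hf: "holefree n b x"
  proof -
    have "card (J p) \<le> (if p \<in> P then N - i + 1 else 0)" if p: "p < n" for p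
    proof (cases "p \<in> P")
      case False
      hence "J p = {}" using memJ[OF p] by blast
      thus ?thesis using False by simp
    next
      case True
      show ?thesis
      proof (cases "i - 2 \<in> J p")
        case False
        have "J p \<subseteq> {i - 1..<N}" using memJ[OF p] Jfin False by fastforce
        hence "card (J p) \<le> card {i - 1..<N}" by (intro card_mono) auto
        thus ?thesis using True i MN by auto
      next
        case True2: True
        have "N - 1 \<notin> J p"
        proof
          assume "N - 1 \<in> J p"
          then obtain t2 where "t2 < b" "p + t2 < n" "x ! (p + t2) \<noteq> 0" using memJ[OF p] i2 by blast
          moreover obtain t1 where "t1 < b" "n \<le> p + t1" "x ! (p + t1 - n) \<noteq> 0"
            using memJ[OF p True2] i2 i MN by auto
          ultimately show False using hf p unfolding holefree_def by blast
        qed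
        hence "J p \<subseteq> {i - 1..<N - 1} \<union> {i - 2}"
        proof -
          assume nj: "N - 1 \<notin> J p"
          show ?thesis
          proof
            fix jj assume jj: "jj \<in> J p"
            hence "jj < N" using Jfin by auto
            moreover have "jj \<noteq> N - 1" using nj jj by auto
            moreover have "i - 1 \<le> jj \<or> jj = i - 2" using memJ[OF p jj] by auto
            ultimately show "jj \<in> {i - 1..<N - 1} \<union> {i - 2}" by auto
          qed
        qed
        hence "card (J p) \<le> card ({i - 1..<N - 1} \<union> {i - 2})" by (intro card_mono) auto
        also have "\<dots> \<le> card {i - 1..<N - 1} + card {i - 2}" by (rule card_Un_le)
        finally show ?thesis using True i MN i2 by auto
      qed
    qed
    hence "wb b Y \<le> (\<Sum>p<n. if p \<in> P then N - i + 1 else 0)"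
      unfolding wY by (intro sum_mono) simp
    thus ?thesis unfolding sumP wx by simp
  qed
qed

lemma mod_sum_cases:
  fixes n r s :: nat
  assumes "0 < n" "r < n" "s \<le> n"
  shows "(r + s) mod n = (if r + s < n then r + s else r + s - n)"
proof (cases "r + s < n")
  case True thus ?thesis by simp
next
  case False
  hence "(r + s) mod n = (r + s - n) mod n" by (intro le_mod_geq) simp
  also have "\<dots> = r + s - n" using assms False by simp
  finally show ?thesis using False by simp
qed

lemma modh1:
  fixes n q w :: nat
  assumes n: "0 < n" and q: "q < n" and e: "(w + (n - q)) mod n = 0"
  shows "w mod n = q"
proof -
  have "(w mod n + (n - q)) mod n = 0" using e by (simp add: mod_add_left_eq)
  moreover have "w mod n < n" using n by simp
  ultimately show ?thesis using mod_sum_cases[OF n, of "w mod n" "n - q"] q by (auto split: if_splits)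
qed

lemma modh2:
  fixes n q w :: nat
  assumes n: "0 < n" and q: "q < n" and e: "(w + (n - 1 - q)) mod n = n - 1"
  shows "w mod n = q"
proof -
  have "(w mod n + (n - 1 - q)) mod n = n - 1" using e by (simp add: mod_add_left_eq)
  moreover have "w mod n < n" using n by simp
  moreover note ms = mod_sum_cases[OF n, of "w mod n" "n - 1 - q"]
  ultimately show ?thesis
  proof (cases "w mod n + (n - 1 - q) < n")
    case True
    have "(w mod n + (n - 1 - q)) mod n = w mod n + (n - 1 - q)"
      using ms \<open>w mod n < n\<close> unfolding if_P[OF True] by simp
    hence "w mod n + (n - 1 - q) = n - 1" using \<open>(w mod n + (n - 1 - q)) mod n = n - 1\<close> by simp
    thus ?thesis using q by linarith
  next
    case False
    have "(w mod n + (n - 1 - q)) mod n = w mod n + (n - 1 - q) - n"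
      using ms \<open>w mod n < n\<close> unfolding if_not_P[OF False] by simp
    hence "w mod n + (n - 1 - q) - n = n - 1" using \<open>(w mod n + (n - 1 - q)) mod n = n - 1\<close> by simp
    thus ?thesis using q \<open>w mod n < n\<close> by linarith
  qed
qed

lemma modf1:
  fixes n u r :: nat
  assumes "u mod n = 0" "r < n"
  shows "(u + r) mod n = r"
proof -
  have "(u + r) mod n = (u mod n + r) mod n" by (simp add: mod_add_left_eq)
  thus ?thesis using assms by simp
qed

lemma modf2:
  fixes n u r :: nat
  assumes n: "0 < n" and "u mod n = n - 1" "r < n"
  shows "(u + r + 1) mod n = r"
proof -
  have "(u + r + 1) mod n = (u + (r + 1)) mod n" by (simp only: add.assoc)
  also have "\<dots> = (u mod n + (r + 1)) mod n" by (rule mod_add_left_eq[symmetric])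
  also have "u mod n + (r + 1) = r + n" using assms by simp
  finally show ?thesis using assms by simp
qed

lemma hole_holefree:
  fixes x :: "'a::zero list"
  assumes lx: "length x = n" and n: "0 < n" and b: "b \<le> n" and H: "H \<in> holes n (chi 1 x)"
    and bH: "b - 1 \<le> card H" and e: "{1, n} \<inter> H \<noteq> {}"
  shows "holefree n b x"
proof -
  obtain a h where a: "a \<in> {1..n}" and h: "h \<ge> 1"
    and Hd: "H = {cyc n (a + k) | k. 1 \<le> k \<and> k \<le> h}" and Hs: "H \<subseteq> {1..n} - chi 1 x"
    using H unfolding holes_def by blast
  have chi1: "chi 1 x = {i \<in> {1..n}. x ! ((i - 1) mod n) \<noteq> 0}" unfolding chi_def lx by auto
  have Z: "x ! ((a + m - 1) mod n) = 0" if m: "1 \<le> m" "m \<le> h" for m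
  proof -
    have "cyc n (a + m) \<in> H" unfolding Hd using m by blast
    hence "cyc n (a + m) \<notin> chi 1 x" "cyc n (a + m) \<in> {1..n}" using Hs by auto
    moreover have "(cyc n (a + m) - 1) mod n = (a + m - 1) mod n" unfolding cyc_def by simp
    ultimately show ?thesis unfolding chi1 by auto
  qed
  have "H = (\<lambda>k. cyc n (a + k)) ` {1..h}" unfolding Hd by (auto simp: image_def)
  hence "card H \<le> h" using card_image_le[of "{1..h}" "\<lambda>k. cyc n (a + k)"] by simp
  hence hb: "b - 1 \<le> h" using bH by simp
  obtain m0 where m0: "1 \<le> m0" "m0 \<le> h" and
    me: "(a + m0 - 1) mod n = 0 \<or> (a + m0 - 1) mod n = n - 1"
  proof -
    obtain z where "z \<in> H" "z = 1 \<or> z = n" using e by auto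
    then obtain m0 where m0: "1 \<le> m0" "m0 \<le> h" and z: "z = cyc n (a + m0)" unfolding Hd by blast
    have zc: "z = (a + m0 - 1) mod n + 1" unfolding z cyc_def by simp
    have "(a + m0 - 1) mod n = 0 \<or> (a + m0 - 1) mod n = n - 1"
      using \<open>z = 1 \<or> z = n\<close>
    proof
      assume "z = 1" thus ?thesis using zc by (intro disjI1) linarith
    next
      assume "z = n" thus ?thesis using zc by (intro disjI2) linarith
    qed
    thus thesis by (rule that[OF m0])
  qed
  show ?thesis unfolding holefree_def
  proof (intro allI impI)
    fix p t1 t2 assume p: "p < n" and t1: "t1 < b" and t2: "t2 < b" and pt1: "n \<le> p + t1"
      and pt2: "p + t2 < n"
    show "x ! (p + t1 - n) = 0 \<or> x ! (p + t2) = 0"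
    proof (rule ccontr)
      assume "\<not> ?thesis"
      hence x1: "x ! (p + t1 - n) \<noteq> 0" and x2: "x ! (p + t2) \<noteq> 0" by auto
      define r1 where "r1 = p + t1 - n"
      define q2 where "q2 = p + t2"
      have r1n: "r1 < n" unfolding r1_def using p t1 pt1 b by simp
      have q2n: "q2 < n" unfolding q2_def using pt2 .
      have x1': "x ! r1 \<noteq> 0" using x1 unfolding r1_def .
      have x2': "x ! q2 \<noteq> 0" using x2 unfolding q2_def .
      define u where "u = a + m0 - 1"
      from me show False
      proof
        assume u0: "(a + m0 - 1) mod n = 0"
        have A1: "h < m0 + r1"
        proof (rule ccontr)
          assume "\<not> h < m0 + r1"
          hence "x ! ((a + (m0 + r1) - 1) mod n) = 0" using m0 by (intro Z) linarith+
          moreover have "a + (m0 + r1) - 1 = u + r1" unfolding u_def using a m0 by linarith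
          moreover have "(u + r1) mod n = r1" using u0 r1n unfolding u_def by (rule modf1)
          ultimately show False using x1' by metis
        qed
        have A2: "m0 \<le> n - q2"
        proof (rule ccontr)
          assume c: "\<not> m0 \<le> n - q2"
          define m where "m = m0 - (n - q2)"
          have "x ! ((a + m - 1) mod n) = 0" using c m0 unfolding m_def by (intro Z) linarith+
          moreover have "(a + m - 1 + (n - q2)) mod n = 0"
          proof -
            have "a + m - 1 + (n - q2) = a + m0 - 1" using c a unfolding m_def by linarith
            thus ?thesis using u0 by simp
          qed
          hence "(a + m - 1) mod n = q2" by (rule modh1[OF n q2n])
          ultimately show False using x2' by metis
        qed
        define k where "k = n - q2"
        have "k + q2 = n" unfolding k_def using q2n by simp
        moreover have "r1 + n = p + t1" unfolding r1_def using pt1 by simp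
        moreover have "b \<le> h + 1" using hb by simp
        ultimately show False using A1 A2 t1 t2 unfolding k_def[symmetric] q2_def by linarith
      next
        assume u1: "(a + m0 - 1) mod n = n - 1"
        have A1: "h < m0 + r1 + 1"
        proof (rule ccontr)
          assume "\<not> h < m0 + r1 + 1"
          hence "x ! ((a + (m0 + r1 + 1) - 1) mod n) = 0" using m0 by (intro Z) linarith+
          moreover have "a + (m0 + r1 + 1) - 1 = u + r1 + 1" unfolding u_def using a m0 by linarith
          moreover have "(u + r1 + 1) mod n = r1" using n u1 r1n unfolding u_def by (rule modf2)
          ultimately show False using x1' by metis
        qed
        have A2: "m0 \<le> n - 1 - q2"
        proof (rule ccontr)
          assume c: "\<not> m0 \<le> n - 1 - q2"
          define m where "m = m0 - (n - 1 - q2)"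
          have "x ! ((a + m - 1) mod n) = 0" using c m0 unfolding m_def by (intro Z) linarith+
          moreover have "(a + m - 1 + (n - 1 - q2)) mod n = n - 1"
          proof -
            have "a + m - 1 + (n - 1 - q2) = a + m0 - 1" using c a unfolding m_def by linarith
            thus ?thesis using u1 by simp
          qed
          hence "(a + m - 1) mod n = q2" by (rule modh2[OF n q2n])
          ultimately show False using x2' by metis
        qed
        define k where "k = n - 1 - q2"
        have "k + q2 + 1 = n" unfolding k_def using q2n by simp
        moreover have "r1 + n = p + t1" unfolding r1_def using pt1 by simp
        moreover have "b \<le> h + 1" using hb by simp
        ultimately show False using A1 A2 t1 t2 unfolding k_def[symmetric] q2_def by linarith
      qed
    qed
  qed
qed

lemma db_le: "c \<in> C \<Longrightarrow> \<not> is_zero_vec c \<Longrightarrow> db b C \<le> wb b c"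
  unfolding db_def by (rule cInf_lower) auto

lemma db_attained:
  assumes "\<exists>c\<in>C. \<not> is_zero_vec c"
  shows "\<exists>c\<in>C. \<not> is_zero_vec c \<and> wb b c = db b C"
proof -
  have "{wb b c | c. c \<in> C \<and> \<not> is_zero_vec c} \<noteq> {}" using assms by auto
  hence "db b C \<in> {wb b c | c. c \<in> C \<and> \<not> is_zero_vec c}" unfolding db_def by (rule Inf_nat_def1)
  thus ?thesis by auto
qed

lemma Ynz:
  fixes A :: "nat \<Rightarrow> nat \<Rightarrow> 'a::field" and x :: "'a list"
  assumes nsc: "NSC M N A" and i: "1 \<le> i" "i \<le> M" and MN: "M \<le> N" and n: "0 < n"
    and lx: "length x = n" and xnz: "\<not> is_zero_vec x"
  defines "Y \<equiv> concat (map (\<lambda>j. map (\<lambda>k. \<Sum>l=1..M. A l j * ((if l = i then x else replicate n 0) ! k)) [0..<n]) [1..<N+1])"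
  shows "\<not> is_zero_vec Y"
proof
  assume Yz: "is_zero_vec Y"
  have N: "0 < N" using i MN by simp
  obtain k where k: "k < n" and xk: "x ! k \<noteq> 0"
    using xnz lx unfolding is_zero_vec_def by (auto simp: in_set_conv_nth)
  define v where "v = (\<lambda>l. (if l = i then x else replicate n 0) ! k)"
  have "N - i + 1 \<le> card {j\<in>{1..N}. (\<Sum>l=1..M. A l j * v l) \<noteq> 0}"
    by (rule core[OF nsc i MN]) (use xk k in \<open>auto simp: v_def\<close>)
  hence "card {j\<in>{1..N}. (\<Sum>l=1..M. A l j * v l) \<noteq> 0} \<noteq> 0" by linarith
  hence "{j\<in>{1..N}. (\<Sum>l=1..M. A l j * v l) \<noteq> 0} \<noteq> {}" by (metis card.empty)
  then obtain j where j: "j \<in> {1..N}" and yj: "(\<Sum>l=1..M. A l j * v l) \<noteq> 0" by auto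
  define z where "z = (j - 1) * n + k"
  have zlt: "z < N * n"
  proof -
    have "z < (j - 1) * n + n" unfolding z_def using k by simp
    also have "\<dots> = j * n" using j by (cases j) auto
    also have "\<dots> \<le> N * n" using j by simp
    finally show ?thesis .
  qed
  have lY: "length Y = N * n" unfolding Y_def
    by (rule mpc_nth(1)[OF n N, where c = "\<lambda>l. if l = i then x else replicate n 0"])
  have "Y ! (z mod (N * n)) = (\<Sum>l=1..M. A l (z div n mod N + 1) * ((if l = i then x else replicate n 0) ! (z mod n)))"
    unfolding Y_def
    by (rule mpc_nth(2)[OF n N, where c = "\<lambda>l. if l = i then x else replicate n 0"])
  moreover have "z mod (N * n) = z" using zlt by simp
  moreover have "z div n = j - 1" "z mod n = k" unfolding z_def using k by auto
  moreover have "(j - 1) mod N + 1 = j" using j by auto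
  ultimately have "Y ! z = (\<Sum>l=1..M. A l j * v l)" unfolding v_def by simp
  moreover have "Y ! z \<in> set Y" using zlt lY by simp
  ultimately show False using Yz yj unfolding is_zero_vec_def by auto
qed


theorem mainTheorem5:
  fixes n M N b :: nat
    and Cs :: "nat \<Rightarrow> ('a::{field,finite}) list set"
    and A :: "nat \<Rightarrow> nat \<Rightarrow> 'a"
  assumes codes: "\<forall>i\<in>{1..M}. lin_code n (Cs i)"
    and nontriv: "\<forall>i\<in>{1..M}. \<exists>c\<in>Cs i. \<not> is_zero_vec c"
    and MN: "1 \<le> M" "M \<le> N"
    and ut: "upper_tri M N A"
    and nsc: "NSC M N A"
    and b: "1 \<le> b" "b \<le> n"
  shows
   "db b (mpc n M N Cs A) \<le> Min ({N * db b (Cs 1)} \<union> {(N - i + 1) * db b (Cs i) + b - 1 | i. 2 \<le> i \<and> i \<le> M})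
    \<and> (Min {(N - i + 1) * db b (Cs i) | i. 1 \<le> i \<and> i \<le> M} = N * db b (Cs 1) \<longrightarrow>
         db b (mpc n M N Cs A) = Min {(N - i + 1) * db b (Cs i) | i. 1 \<le> i \<and> i \<le> M})
    \<and> (\<forall>i0. 2 \<le> i0 \<and> i0 \<le> M \<and>
          (N - i0 + 1) * db b (Cs i0) = Min {(N - i + 1) * db b (Cs i) | i. 1 \<le> i \<and> i \<le> M} \<longrightarrow>
          (\<exists>c\<in>Cs i0. wb b c = db b (Cs i0) \<and>
             (\<exists>H\<in>holes n (chi 1 c). card H \<ge> b - 1 \<and> {1, n} \<inter> H \<noteq> {})) \<longrightarrow>
          db b (mpc n M N Cs A) = Min {(N - i + 1) * db b (Cs i) | i. 1 \<le> i \<and> i \<le> M})"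
  proof -
  have n: "0 < n" using b by simp
  have N: "0 < N" using MN by simp
  define C where "C = mpc n M N Cs A"
  define D where "D = Min {(N - i + 1) * db b (Cs i) | i. 1 \<le> i \<and> i \<le> M}"
  have lens: "\<And>l c. l \<in> {1..M} \<Longrightarrow> c \<in> Cs l \<Longrightarrow> length c = n"
    using codes unfolding lin_code_def by auto
  have zeroin: "\<And>l. l \<in> {1..M} \<Longrightarrow> replicate n 0 \<in> Cs l"
    using codes unfolding lin_code_def by auto
  define Ys where "Ys = (\<lambda>i x. concat (map (\<lambda>j. map (\<lambda>k. \<Sum>l=1..M. A l j * ((if l = i then x else replicate n 0) ! k)) [0..<n]) [1..<N+1]))"
  have memC: "Ys i x \<in> C" if i: "1 \<le> i" "i \<le> M" and x: "x \<in> Cs i" for i x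
  proof -
    have "\<forall>l\<in>{1..M}. (if l = i then x else replicate n 0) \<in> Cs l" using x zeroin by auto
    thus ?thesis unfolding C_def mpc_def Ys_def
      by (intro CollectI exI[where x="\<lambda>l. if l = i then x else replicate n 0"] conjI refl)
  qed
  have dbYs: "db b C \<le> wb b (Ys i x)" if i: "1 \<le> i" "i \<le> M" and x: "x \<in> Cs i"
    and xnz: "\<not> is_zero_vec x" for i x
  proof (rule db_le)
    show "Ys i x \<in> C" by (rule memC[OF i x])
    have lx: "length x = n" using lens i x by auto
    show "\<not> is_zero_vec (Ys i x)" unfolding Ys_def by (rule Ynz[OF nsc i MN(2) n lx xnz])
  qed
  have Dfin: "{(N - i + 1) * db b (Cs i) | i. 1 \<le> i \<and> i \<le> M} = (\<lambda>i. (N - i + 1) * db b (Cs i)) ` {1..M}"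
    by auto
  have Dle: "D \<le> (N - i + 1) * db b (Cs i)" if "1 \<le> i" "i \<le> M" for i
    unfolding D_def Dfin using that by (intro Min_le) auto
  have minx: "\<exists>x\<in>Cs i. \<not> is_zero_vec x \<and> wb b x = db b (Cs i)" if "1 \<le> i" "i \<le> M" for i
    by (rule db_attained) (use nontriv that in auto)
  have low: "D \<le> db b C"
  proof -
    have "1 \<in> {1..M}" using MN by simp
    then obtain x1 where x1: "x1 \<in> Cs 1" "\<not> is_zero_vec x1" using nontriv by blast
    have "\<exists>c\<in>C. \<not> is_zero_vec c"
      using memC[of 1 x1] x1 MN Ynz[OF nsc _ _ MN(2) n, of 1 x1] lens[of 1 x1] unfolding Ys_def by auto
    then obtain Y where YC: "Y \<in> C" and Ynz0: "\<not> is_zero_vec Y" and wY: "wb b Y = db b C"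
      using db_attained by blast
    obtain c where Yc: "Y = concat (map (\<lambda>j. map (\<lambda>k. \<Sum>l=1..M. A l j * (c l ! k)) [0..<n]) [1..<N+1])"
      and cC: "\<forall>l\<in>{1..M}. c l \<in> Cs l"
      using YC unfolding C_def mpc_def by blast
    have lc: "\<forall>l\<in>{1..M}. length (c l) = n" using cC lens by auto
    have ex: "\<exists>l\<in>{1..M}. \<not> is_zero_vec (c l)"
    proof (rule ccontr)
      assume "\<not> ?thesis"
      hence allz: "\<forall>l\<in>{1..M}. is_zero_vec (c l)" by auto
      have "is_zero_vec Y" unfolding is_zero_vec_def
      proof
        fix v assume "v \<in> set Y"
        then obtain z where z: "z < length Y" and v: "v = Y ! z" by (auto simp: in_set_conv_nth)
        have lY: "length Y = N * n" unfolding Yc by (rule mpc_nth(1)[OF n N])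
        have "Y ! (z mod (N * n)) = (\<Sum>l=1..M. A l (z div n mod N + 1) * (c l ! (z mod n)))"
          unfolding Yc by (rule mpc_nth(2)[OF n N])
        also have "\<dots> = 0"
        proof (rule sum.neutral, rule ballI)
          fix l assume l: "l \<in> {1..M}"
          have "z mod n < n" using n by simp
          hence "c l ! (z mod n) = 0" using allz l lc by (intro zero_vec_nth) auto
          thus "A l (z div n mod N + 1) * (c l ! (z mod n)) = 0" by simp
        qed
        finally show "v = 0" using z lY v by simp
      qed
      thus False using Ynz0 by simp
    qed
    define S where "S = {l\<in>{1..M}. \<not> is_zero_vec (c l)}"
    define s where "s = Max S"
    have Sf: "finite S" "S \<noteq> {}" unfolding S_def using ex by auto
    have sS: "s \<in> S" unfolding s_def using Sf by (rule Max_in)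
    hence s: "1 \<le> s" "s \<le> M" "\<not> is_zero_vec (c s)" unfolding S_def by auto
    have sz: "\<forall>l. s < l \<and> l \<le> M \<longrightarrow> is_zero_vec (c l)"
    proof (intro allI impI)
      fix l assume l: "s < l \<and> l \<le> M"
      show "is_zero_vec (c l)"
      proof (rule ccontr)
        assume "\<not> is_zero_vec (c l)"
        hence "l \<in> S" unfolding S_def using l s by auto
        hence "l \<le> s" unfolding s_def using Sf by simp
        thus False using l by simp
      qed
    qed
    have "(N - s + 1) * wb b (c s) \<le> wb b Y"
      unfolding Yc by (rule lower[OF nsc MN(2) s(1) s(2) n b(2) lc s(3) sz])
    moreover have "db b (Cs s) \<le> wb b (c s)" using cC s by (intro db_le) auto
    moreover have "D \<le> (N - s + 1) * db b (Cs s)" using s by (intro Dle)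
    ultimately have "D \<le> wb b Y" by (meson le_trans mult_le_mono2)
    thus ?thesis using wY by simp
  qed
  have up1: "db b C \<le> N * db b (Cs 1)"
  proof -
    obtain x where x: "x \<in> Cs 1" "\<not> is_zero_vec x" "wb b x = db b (Cs 1)" using minx MN by auto
    have lx: "length x = n" using lens[of 1 x] x MN by auto
    have "wb b (Ys 1 x) \<le> N * wb b x" unfolding Ys_def
      by (rule upper(2)[OF ut _ MN(1) MN(2) n b(2) lx]) (use MN in auto)
    thus ?thesis using dbYs[of 1 x] x MN by simp
  qed
  have upi: "db b C \<le> (N - i + 1) * db b (Cs i) + b - 1" if i: "2 \<le> i" "i \<le> M" for i
  proof -
    have i1: "1 \<le> i" using i by simp
    obtain x where x: "x \<in> Cs i" "\<not> is_zero_vec x" "wb b x = db b (Cs i)" using minx[OF i1 i(2)] by blast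
    have lx: "length x = n" using lens[of i x] x i1 i by auto
    have "wb b (Ys i x) \<le> (N - i + 1) * wb b x + (b - 1)" unfolding Ys_def
      by (rule upper(1)[OF ut _ i(2) MN(2) n b(2) lx]) (use i in auto)
    thus ?thesis using dbYs[of i x] x i b by simp
  qed
  show ?thesis
  proof (intro conjI allI impI)
    have f2: "{(N - i + 1) * db b (Cs i) + b - 1 | i. 2 \<le> i \<and> i \<le> M} =
      (\<lambda>i. (N - i + 1) * db b (Cs i) + b - 1) ` {2..M}" by auto
    show "db b (mpc n M N Cs A) \<le> Min ({N * db b (Cs 1)} \<union> {(N - i + 1) * db b (Cs i) + b - 1 | i. 2 \<le> i \<and> i \<le> M})"
      unfolding C_def[symmetric]
    proof (rule Min.boundedI)
      show "finite ({N * db b (Cs 1)} \<union> {(N - i + 1) * db b (Cs i) + b - 1 | i. 2 \<le> i \<and> i \<le> M})"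
        unfolding f2 by simp
    next
      show "{N * db b (Cs 1)} \<union> {(N - i + 1) * db b (Cs i) + b - 1 | i. 2 \<le> i \<and> i \<le> M} \<noteq> {}" by simp
    next
      fix a assume "a \<in> {N * db b (Cs 1)} \<union> {(N - i + 1) * db b (Cs i) + b - 1 | i. 2 \<le> i \<and> i \<le> M}"
      thus "db b C \<le> a" using up1 upi by auto
    qed
  next
    assume "Min {(N - i + 1) * db b (Cs i) | i. 1 \<le> i \<and> i \<le> M} = N * db b (Cs 1)"
    hence "D = N * db b (Cs 1)" unfolding D_def .
    thus "db b (mpc n M N Cs A) = Min {(N - i + 1) * db b (Cs i) | i. 1 \<le> i \<and> i \<le> M}"
      using up1 low unfolding C_def[symmetric] D_def[symmetric] by simp
  next
    fix i0
    assume i0: "2 \<le> i0 \<and> i0 \<le> M \<and>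
          (N - i0 + 1) * db b (Cs i0) = Min {(N - i + 1) * db b (Cs i) | i. 1 \<le> i \<and> i \<le> M}"
    assume "\<exists>c\<in>Cs i0. wb b c = db b (Cs i0) \<and>
             (\<exists>H\<in>holes n (chi 1 c). card H \<ge> b - 1 \<and> {1, n} \<inter> H \<noteq> {})"
    then obtain x H where x: "x \<in> Cs i0" "wb b x = db b (Cs i0)" and H: "H \<in> holes n (chi 1 x)"
      and cH: "b - 1 \<le> card H" and eH: "{1, n} \<inter> H \<noteq> {}" by blast
    have i0': "1 \<le> i0" "i0 \<le> M" "2 \<le> i0" using i0 by auto
    have DD: "(N - i0 + 1) * db b (Cs i0) = D" using i0 unfolding D_def by simp
    have lx: "length x = n" using lens[of i0 x] x i0' by auto
    have xnz: "\<not> is_zero_vec x"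
    proof
      assume xz: "is_zero_vec x"
      obtain a where "cyc n a \<in> chi 1 x" using H unfolding holes_def by blast
      then obtain j where "x ! j \<noteq> 0" "j < length x" unfolding chi_def using lx n by auto
      thus False using xz zero_vec_nth by blast
    qed
    have hf: "holefree n b x" by (rule hole_holefree[OF lx n b(2) H cH eH])
    have "wb b (Ys i0 x) \<le> (N - i0 + 1) * wb b x" unfolding Ys_def
      by (rule upper(3)[OF ut i0'(1) i0'(2) MN(2) n b(2) lx i0'(3) hf])
    hence "db b C \<le> D" using dbYs[OF i0'(1) i0'(2) x(1) xnz] x(2) DD by simp
    thus "db b (mpc n M N Cs A) = Min {(N - i + 1) * db b (Cs i) | i. 1 \<le> i \<and> i \<le> M}"
      using low unfolding C_def[symmetric] D_def[symmetric] by simp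
  qed
qed

end
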